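(* For $q\in(0,1)$, $$\lim_{n\to\infty}T_{1,n,q}=\begin{cases}\dfrac{1}{2q-1}\displaystyle\int_0^1\frac{u^{-2q+1}-1}{1-u}\cdot\frac{(1-\frac u2)^{q-1}-1}{u}\,du & q\in(0,1)\setminus\{\tfrac12\},\\[8pt] \displaystyle\int_0^1\frac{-\ln u}{1-u}\cdot\frac{(1-\frac u2)^{-1/2}-1}{u}\,du & q=\tfrac12.\end{cases}$$
   Context: For $q\in(0,1)$ and $k\ge1$: $H(k,q):=\frac{k}{2q-1}\Big(\frac{\Gamma(k+2q)}{\Gamma(k+1)\Gamma(2q)}-1\Big)$ if $q\ne\frac12$, and $H(k,\tfrac12):=k\sum_{j=1}^k\frac1j$. Also $I(k,q):=\frac{\Gamma(k+1)}{\Gamma(k+q)\Gamma(1-q)}$. Define $$T_{1,n,q}:=\sum_{k=1}^n\frac{H(k,q)I(k,q)}{k^2}\int_0^1\frac{u^{k+q-1}(1-u)^{1-q}}{1+u}\,du.$$ *)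

theory Defs
  imports "HOL-Analysis.Analysis"
begin

definition H :: "nat \<Rightarrow> real \<Rightarrow> real" where
  "H k q = (if q = 1/2 then real k * (\<Sum>j=1..k. 1 / real j)
            else real k / (2*q - 1) * (Gamma (real k + 2*q) / (Gamma (real k + 1) * Gamma (2*q)) - 1))"

definition I :: "nat \<Rightarrow> real \<Rightarrow> real" where
  "I k q = Gamma (real k + 1) / (Gamma (real k + q) * Gamma (1 - q))"

definition T1 :: "nat \<Rightarrow> real \<Rightarrow> real" where
  "T1 n q = (\<Sum>k=1..n. H k q * I k q / (real k)^2 *
      (LBINT u:{0<..<1}. u powr (real k + q - 1) * (1 - u) powr (1 - q) / (1 + u)))"

definition T1_limit :: "real \<Rightarrow> real" where
  "T1_limit q = (if q = 1/2 then
      (LBINT u:{0<..<1}. (- ln u) / (1 - u) * (((1 - u/2) powr (-1/2) - 1) / u))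
    else 1 / (2*q - 1) *
      (LBINT u:{0<..<1}. (u powr (-2*q + 1) - 1) / (1 - u) * (((1 - u/2) powr (q - 1) - 1) / u)))"

end

theory Submission
  imports Defs
begin


definition bcoef :: "real \<Rightarrow> nat \<Rightarrow> real" where
  "bcoef q n = pochhammer (1 - q) n / (fact n * 2 ^ n)"

lemma bcoef_nonneg: "q < 1 \<Longrightarrow> 0 \<le> bcoef q n"
  unfolding bcoef_def by (intro divide_nonneg_pos pochhammer_pos[THEN less_imp_le]) auto

lemma bcoef_sums:
  assumes "0 \<le> s" "s \<le> 1"
  shows "(\<lambda>n. bcoef q n * s ^ n) sums ((1 - s/2) powr (q - 1))"
proof -
  have "\<bar>-s/2\<bar> < 1" using assms by auto
  from gen_binomial_real[OF this, of "q - 1"]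
  have "(\<lambda>n. ((q - 1) gchoose n) * (-s/2) ^ n) sums (1 + -s/2) powr (q - 1)" .
  moreover have "((q - 1) gchoose n) * (-s/2) ^ n = bcoef q n * s ^ n" for n
  proof -
    have "((q - 1) gchoose n) = (-1)^n * pochhammer (1 - q) n / fact n"
      by (simp add: gbinomial_pochhammer)
    moreover have "(-s/2) ^ n = (-1)^n * s^n / 2^n"
    proof -
      have "(-s/2) = (-1) * (s/2)" by simp
      then have "(-s/2) ^ n = (-1)^n * (s/2)^n" by (metis power_mult_distrib)
      then show ?thesis by (simp add: power_divide)
    qed
    ultimately have "((q - 1) gchoose n) * (-s/2) ^ n = ((-1)^n * (-1)^n) * (pochhammer (1 - q) n / fact n) * (s^n / 2^n)"
      by simp
    also have "(-1::real)^n * (-1)^n = 1" by (simp flip: power_mult_distrib)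
    finally show ?thesis unfolding bcoef_def by simp
  qed
  ultimately show ?thesis by simp
qed

lemma nn_Beta:
  assumes "a > 0" "b > (0::real)"
  shows "(\<integral>\<^sup>+x. ennreal (x powr (a - 1) * (1 - x) powr (b - 1)) * indicator {0<..<1} x \<partial>lborel)
         = ennreal (Beta a b)"
proof -
  have "((\<lambda>t. t powr (a - 1) * (1 - t) powr (b - 1)) has_integral Beta a b) {0<..<1}"
    using has_integral_Beta_real[OF assms] by (simp add: has_integral_Icc_iff_Ioo)
  then show ?thesis
    by (intro nn_integral_has_integral_lebesgue') auto
qed

lemma nn_sums_integral:
  fixes f :: "nat \<Rightarrow> real \<Rightarrow> real"
  assumes "\<And>x. x \<in> S \<Longrightarrow> (\<lambda>m. f m x) sums g x"
    and "\<And>m x. x \<in> S \<Longrightarrow> 0 \<le> f m x"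
    and "\<And>m. f m \<in> borel_measurable lborel" and "S \<in> sets lborel"
  shows "(\<integral>\<^sup>+x. ennreal (g x) * indicator S x \<partial>lborel)
       = (\<Sum>m. \<integral>\<^sup>+x. ennreal (f m x) * indicator S x \<partial>lborel)"
proof -
  have "(\<integral>\<^sup>+x. ennreal (g x) * indicator S x \<partial>lborel)
      = (\<integral>\<^sup>+x. (\<Sum>m. ennreal (f m x) * indicator S x) \<partial>lborel)"
  proof (intro nn_integral_cong)
    fix x :: real
    show "ennreal (g x) * indicator S x = (\<Sum>m. ennreal (f m x) * indicator S x)"
    proof (cases "x \<in> S")
      case True
      then have "(\<Sum>m. ennreal (f m x)) = ennreal (\<Sum>m. f m x)"
        using assms(1,2) by (intro suminf_ennreal2) (auto simp: sums_iff)
      also have "(\<Sum>m. f m x) = g x" using assms(1)[OF True] by (simp add: sums_iff)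
      finally show ?thesis using True by simp
    qed simp
  qed
  also have "\<dots> = (\<Sum>m. \<integral>\<^sup>+x. ennreal (f m x) * indicator S x \<partial>lborel)"
    using assms(3,4) by (intro nn_integral_suminf) (auto simp: measurable_lborel1 borel_measurable_indicator)
  finally show ?thesis .
qed



lemma geom_aux:
  assumes "0 < u" "u < (1::real)"
  shows "(\<lambda>m. (1 - u)^m / 2^(m+1)) sums (1 / (1 + u))"
proof -
  have "norm ((1 - u)/2) < 1" using assms by auto
  from geometric_sums[OF this] have "(\<lambda>m. ((1 - u)/2)^m / 2) sums (1 / (1 - (1 - u)/2) / 2)"
    by (rule sums_divide)
  moreover have "(\<lambda>m. ((1 - u)/2)^m / 2) = (\<lambda>m. (1 - u)^m / 2^(m+1))"
    by (rule ext) (simp add: power_divide)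
  moreover have "1 / (1 - (1 - u)/2) / 2 = 1 / (1 + u)" using assms by (simp add: field_simps)
  ultimately show ?thesis by metis
qed

lemma aux_alg: "(a::real) \<noteq> 0 \<Longrightarrow> b \<noteq> 0 \<Longrightarrow> F \<noteq> 0 \<Longrightarrow> e \<noteq> 0 \<Longrightarrow> t \<noteq> 0 \<Longrightarrow>
   c / (a * b) * (a * d / e / t) = d / (b * F * t) * (F * c / e)"
  by (simp add: field_simps)

lemma gamma_identity:
  assumes q: "0 < q" "q < 1" and k: "k \<ge> 1"
  shows "Gamma (real k) / (Gamma (real k + q) * Gamma (1 - q)) * (Beta (real k + q) (real m + 2 - q) / 2^(m+1))
       = bcoef q (m+1) * Beta (real m + 2) (real k)"
proof -
  have g1: "Gamma (real k + q) > 0" "Gamma (1 - q) > 0" "Gamma (real k) > 0"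
      "Gamma (real m + 2) > 0" "Gamma (real k + real m + 2) > 0"
    using q k by (auto intro!: Gamma_real_pos)
  have f: "fact (Suc m) = Gamma (real m + 2)"
  proof -
    have "Gamma (1 + real (Suc m)) = fact (Suc m)" by (rule Gamma_fact)
    moreover have "1 + real (Suc m) = real m + 2" by simp
    ultimately show ?thesis by metis
  qed
  have p: "pochhammer (1 - q) (Suc m) = Gamma (real m + 2 - q) / Gamma (1 - q)"
  proof -
    have "(1 - q) \<notin> \<int>\<^sub>\<le>\<^sub>0" using q by (auto elim!: nonpos_Ints_cases)
    then show ?thesis by (simp add: pochhammer_Gamma algebra_simps)
  qed
  have b: "bcoef q (m+1) = Gamma (real m + 2 - q) / (Gamma (1 - q) * Gamma (real m + 2) * 2^(m+1))"
    unfolding bcoef_def using p f by simp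
  have e1: "real k + q + (real m + 2 - q) = real k + real m + 2" by simp
  have e2: "real m + 2 + real k = real k + real m + 2" by simp
  show ?thesis
    unfolding b Beta_def e1 e2
    by (rule aux_alg) (use g1 in \<open>linarith | simp\<close>)+
qed

lemma nn_Beta_scaled:
  assumes "a > 0" "b > (0::real)" "c \<ge> 0"
    and "\<And>u. u \<in> {0<..<1} \<Longrightarrow> f u = c * (u powr (a - 1) * (1 - u) powr (b - 1))"
  shows "(\<integral>\<^sup>+u. ennreal (f u) * indicator {0<..<1} u \<partial>lborel) = ennreal (c * Beta a b)"
proof -
  have "(\<integral>\<^sup>+u. ennreal (f u) * indicator {0<..<1} u \<partial>lborel)
      = (\<integral>\<^sup>+u. ennreal c * (ennreal (u powr (a - 1) * (1 - u) powr (b - 1)) * indicator {0<..<1} u) \<partial>lborel)"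
  proof (intro nn_integral_cong)
    fix u :: real
    show "ennreal (f u) * indicator {0<..<1} u = ennreal c * (ennreal (u powr (a - 1) * (1 - u) powr (b - 1)) * indicator {0<..<1} u)"
    proof (cases "u \<in> {0<..<1}")
      case True
      then show ?thesis using assms(3,4) by (simp add: ennreal_mult')
    qed simp
  qed
  also have "\<dots> = ennreal c * (\<integral>\<^sup>+u. ennreal (u powr (a - 1) * (1 - u) powr (b - 1)) * indicator {0<..<1} u \<partial>lborel)"
    by (rule nn_integral_cmult) measurable
  also have "\<dots> = ennreal c * ennreal (Beta a b)" using nn_Beta[OF assms(1,2)] by simp
  also have "\<dots> = ennreal (c * Beta a b)" using assms(3) by (simp add: ennreal_mult')
  finally show ?thesis .
qed

lemma key_k:
  assumes q: "0 < q" "q < 1" and k: "k \<ge> 1"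
  shows "ennreal (Gamma (real k) / (Gamma (real k + q) * Gamma (1 - q))) *
      (\<integral>\<^sup>+u. ennreal (u powr (real k + q - 1) * (1 - u) powr (1 - q) / (1 + u)) * indicator {0<..<1} u \<partial>lborel)
    = (\<integral>\<^sup>+s. ennreal ((1 - s)^(k-1) * ((1 - s/2) powr (q - 1) - 1)) * indicator {0<..<1} s \<partial>lborel)"
proof -
  define c where "c = Gamma (real k) / (Gamma (real k + q) * Gamma (1 - q))"
  have c0: "c \<ge> 0" using q k
    by (auto simp: c_def intro!: divide_nonneg_pos mult_pos_pos Gamma_real_pos less_imp_le)
  have L: "(\<integral>\<^sup>+u. ennreal (u powr (real k + q - 1) * (1 - u) powr (1 - q) / (1 + u)) * indicator {0<..<1} u \<partial>lborel)
     = (\<Sum>m. \<integral>\<^sup>+u. ennreal (u powr (real k + q - 1) * (1 - u) powr (1 - q) * ((1 - u)^m / 2^(m+1))) * indicator {0<..<1} u \<partial>lborel)"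
  proof (rule nn_sums_integral)
    fix u :: real assume "u \<in> {0<..<1}"
    then have "(\<lambda>m. (1 - u)^m / 2^(m+1)) sums (1 / (1 + u))" by (intro geom_aux) auto
    from sums_mult[OF this, of "u powr (real k + q - 1) * (1 - u) powr (1 - q)"]
    show "(\<lambda>m. u powr (real k + q - 1) * (1 - u) powr (1 - q) * ((1 - u)^m / 2^(m+1))) sums
          (u powr (real k + q - 1) * (1 - u) powr (1 - q) / (1 + u))" by simp
  next
    fix m and u :: real assume "u \<in> {0<..<1}"
    then show "0 \<le> u powr (real k + q - 1) * (1 - u) powr (1 - q) * ((1 - u)^m / 2^(m+1))" by auto
  qed measurable
  have L2: "(\<integral>\<^sup>+u. ennreal (u powr (real k + q - 1) * (1 - u) powr (1 - q) * ((1 - u)^m / 2^(m+1))) * indicator {0<..<1} u \<partial>lborel)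
     = ennreal ((1 / 2^(m+1)) * Beta (real k + q) (real m + 2 - q))" for m
  proof (rule nn_Beta_scaled)
    fix u :: real assume u: "u \<in> {0<..<1}"
    then have "(1 - u)^m = (1 - u) powr (real m)" by (simp add: powr_realpow)
    then have "(1 - u) powr (1 - q) * (1 - u)^m = (1 - u) powr ((real m + 2 - q) - 1)"
      using u by (simp add: powr_add[symmetric] algebra_simps)
    then show "u powr (real k + q - 1) * (1 - u) powr (1 - q) * ((1 - u)^m / 2^(m+1)) =
        1 / 2^(m+1) * (u powr (real k + q - 1) * (1 - u) powr ((real m + 2 - q) - 1))"
      by (simp add: field_simps)
  qed (use q k in auto)
  have R: "(\<integral>\<^sup>+s. ennreal ((1 - s)^(k-1) * ((1 - s/2) powr (q - 1) - 1)) * indicator {0<..<1} s \<partial>lborel)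
     = (\<Sum>m. \<integral>\<^sup>+s. ennreal ((1 - s)^(k-1) * (bcoef q (Suc m) * s^(Suc m))) * indicator {0<..<1} s \<partial>lborel)"
  proof (rule nn_sums_integral)
    fix s :: real assume "s \<in> {0<..<1}"
    then have "(\<lambda>n. bcoef q n * s ^ n) sums ((1 - s/2) powr (q - 1))" by (intro bcoef_sums) auto
    then have "(\<lambda>n. bcoef q (Suc n) * s ^ (Suc n)) sums ((1 - s/2) powr (q - 1) - bcoef q 0 * s^0)"
      by (subst sums_Suc_iff) simp
    moreover have "bcoef q 0 = 1" by (simp add: bcoef_def)
    ultimately have "(\<lambda>n. bcoef q (Suc n) * s ^ (Suc n)) sums ((1 - s/2) powr (q - 1) - 1)" by simp
    from sums_mult[OF this, of "(1 - s)^(k-1)"]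
    show "(\<lambda>m. (1 - s)^(k-1) * (bcoef q (Suc m) * s^(Suc m))) sums ((1 - s)^(k-1) * ((1 - s/2) powr (q - 1) - 1))" .
  next
    fix m and s :: real assume "s \<in> {0<..<1}"
    then show "0 \<le> (1 - s)^(k-1) * (bcoef q (Suc m) * s^(Suc m))" using bcoef_nonneg[OF q(2)] by auto
  qed measurable
  have R2: "(\<integral>\<^sup>+s. ennreal ((1 - s)^(k-1) * (bcoef q (Suc m) * s^(Suc m))) * indicator {0<..<1} s \<partial>lborel)
     = ennreal (bcoef q (m+1) * Beta (real m + 2) (real k))" for m
  proof (rule nn_Beta_scaled)
    fix s :: real assume s: "s \<in> {0<..<1}"
    then have "(1 - s)^(k-1) = (1 - s) powr (real k - 1)" using k by (simp add: powr_realpow[symmetric] of_nat_diff)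
    moreover have "s^(Suc m) = s powr (real m + 2 - 1)"
    proof -
      have "s powr (real m + 2 - 1) = s powr (real (Suc m))" by simp
      also have "\<dots> = s^(Suc m)" using s by (intro powr_realpow) auto
      finally show ?thesis by simp
    qed
    ultimately show "(1 - s)^(k-1) * (bcoef q (Suc m) * s^(Suc m)) =
        bcoef q (m+1) * (s powr (real m + 2 - 1) * (1 - s) powr (real k - 1))" by simp
  qed (use q k bcoef_nonneg[OF q(2)] in auto)
  have "ennreal c * (\<Sum>m. ennreal ((1 / 2^(m+1)) * Beta (real k + q) (real m + 2 - q)))
      = (\<Sum>m. ennreal c * ennreal ((1 / 2^(m+1)) * Beta (real k + q) (real m + 2 - q)))"
    by (rule ennreal_suminf_cmult[symmetric])
  also have "\<dots> = (\<Sum>m. ennreal (bcoef q (m+1) * Beta (real m + 2) (real k)))"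
  proof (intro suminf_cong)
    fix m
    have "c * ((1 / 2^(m+1)) * Beta (real k + q) (real m + 2 - q)) = bcoef q (m+1) * Beta (real m + 2) (real k)"
      using gamma_identity[OF q k, of m] by (simp add: c_def)
    then show "ennreal c * ennreal ((1 / 2^(m+1)) * Beta (real k + q) (real m + 2 - q)) = ennreal (bcoef q (m+1) * Beta (real m + 2) (real k))"
      using c0 by (simp add: ennreal_mult'[symmetric])
  qed
  finally show ?thesis unfolding c_def[symmetric] L L2 R R2 .
qed



definition acoef :: "real \<Rightarrow> nat \<Rightarrow> real" where
  "acoef q k = H k q / real k"

definition Fq :: "real \<Rightarrow> real \<Rightarrow> real" where
  "Fq q u = (if q = 1/2 then (- ln u) / (1 - u) * (((1 - u/2) powr (q - 1) - 1) / u)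
     else 1 / (2*q - 1) * ((u powr (-2*q + 1) - 1) / (1 - u) * (((1 - u/2) powr (q - 1) - 1) / u)))"

lemma pochhammer_mono_real:
  assumes "0 < a" "a \<le> (b::real)"
  shows "pochhammer a k \<le> pochhammer b k"
  unfolding pochhammer_prod using assms by (intro prod_mono) auto

lemma sums_shift_div:
  fixes f :: "nat \<Rightarrow> real"
  assumes "(\<lambda>k. f k * x^k) sums S" "f 0 = 0" "x \<noteq> 0"
  shows "(\<lambda>k. f (Suc k) * x^k) sums (S / x)"
proof -
  have "(\<lambda>k. f (Suc k) * x^(Suc k)) sums S"
    using assms(1,2) by (subst sums_Suc_iff) simp
  from sums_divide[OF this, of x] show ?thesis using assms(3) by simp
qed

lemma cc_sums:
  assumes "0 \<le> x" "x < (1::real)"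
  shows "(\<lambda>k. pochhammer (2*q) k / fact k * x^k) sums ((1 - x) powr (-2*q))"
proof -
  have "\<bar>-x\<bar> < 1" using assms by auto
  from gen_binomial_real[OF this, of "-2*q"]
  have "(\<lambda>k. ((-2*q) gchoose k) * (-x)^k) sums (1 + -x) powr (-2*q)" .
  moreover have "((-2*q) gchoose k) * (-x)^k = pochhammer (2*q) k / fact k * x^k" for k
  proof -
    have "((-2*q) gchoose k) = (-1)^k * pochhammer (2*q) k / fact k"
      by (simp add: gbinomial_pochhammer)
    moreover have "(-x)^k = (-1)^k * x^k" by (metis mult_minus1 power_mult_distrib)
    ultimately have "((-2*q) gchoose k) * (-x)^k = ((-1)^k * (-1)^k) * (pochhammer (2*q) k / fact k) * x^k"
      by simp
    also have "(-1::real)^k * (-1)^k = 1" by (simp flip: power_mult_distrib)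
    finally show ?thesis by simp
  qed
  ultimately show ?thesis by simp
qed

lemma acoef_ne:
  assumes q: "0 < q" "q < 1" "q \<noteq> 1/2" and k: "k \<ge> 1"
  shows "acoef q k = (pochhammer (2*q) k / fact k - 1) / (2*q - 1)"
proof -
  have "(2*q) \<notin> \<int>\<^sub>\<le>\<^sub>0" using q by (auto elim!: nonpos_Ints_cases)
  then have p: "pochhammer (2*q) k = Gamma (real k + 2*q) / Gamma (2*q)"
    by (simp add: pochhammer_Gamma add.commute)
  have f: "Gamma (real k + 1) = fact k"
    using Gamma_fact[of k, where 'a=real] by (simp add: add.commute)
  have "Gamma (2*q) > 0" using q by (intro Gamma_real_pos) auto
  have "acoef q k = (Gamma (real k + 2*q) / (Gamma (real k + 1) * Gamma (2*q)) - 1) / (2*q-1)"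
    using q k unfolding acoef_def H_def by simp
  also have "Gamma (real k + 2*q) / (Gamma (real k + 1) * Gamma (2*q)) = pochhammer (2*q) k / fact k"
    unfolding p f by simp
  finally show ?thesis .
qed

lemma acoef_half:
  assumes k: "k \<ge> 1"
  shows "acoef (1/2) k = (\<Sum>j=1..k. 1 / real j)"
  using k unfolding acoef_def H_def by simp

lemma acoef_nonneg:
  assumes q: "0 < q" "q < 1"
  shows "acoef q k \<ge> 0"
proof (cases "k = 0")
  case True then show ?thesis by (simp add: acoef_def)
next
  case False
  then have k: "k \<ge> 1" by simp
  show ?thesis
  proof (cases "q = 1/2")
    case True
    then have qq: "q = 1/2" .
    show ?thesis unfolding qq acoef_half[OF k] by (auto intro!: sum_nonneg)
  next
    case qn: False
    have fk: "fact k = pochhammer (1::real) k" by (simp add: pochhammer_fact)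
    have fpos: "(fact k :: real) > 0" by simp
    show ?thesis
    proof (cases "q < 1/2")
      case True
      then have "pochhammer (2*q) k \<le> pochhammer 1 k" using q by (intro pochhammer_mono_real) auto
      then have "pochhammer (2*q) k / fact k \<le> 1" using fpos fk by (simp add: divide_le_eq)
      then have "0 \<le> (pochhammer (2*q) k / fact k - 1) / (2*q - 1)" using True by (intro divide_nonpos_neg) auto
      then show ?thesis using acoef_ne[OF q qn k] by simp
    next
      case False
      then have "pochhammer 1 k \<le> pochhammer (2*q) k" using q qn by (intro pochhammer_mono_real) auto
      then have "1 \<le> pochhammer (2*q) k / fact k" using fpos fk by (simp add: le_divide_eq)
      then have "0 \<le> (pochhammer (2*q) k / fact k - 1) / (2*q - 1)" using False qn by (intro divide_nonneg_pos) auto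
      then show ?thesis using acoef_ne[OF q qn k] by simp
    qed
  qed
qed



lemma harm_sum_rewrite:
  fixes x :: real
  shows "(\<Sum>i\<le>k. x^i / real i * x^(k - i)) = (\<Sum>j=1..k. 1 / real j) * x^k"
proof -
  have "(\<Sum>i\<le>k. x^i / real i * x^(k - i)) = (\<Sum>i\<le>k. x^k * (1 / real i))"
  proof (intro sum.cong refl)
    fix i assume "i \<in> {..k}"
    then have "x^i * x^(k - i) = x^k" by (simp flip: power_add)
    then show "x^i / real i * x^(k - i) = x^k * (1 / real i)" by (simp add: field_simps)
  qed
  also have "\<dots> = x^k * (\<Sum>i\<le>k. 1 / real i)" by (simp add: sum_distrib_left)
  also have "(\<Sum>i\<le>k. 1 / real i) = (\<Sum>j=1..k. 1 / real j)"
  proof -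
    have "(\<Sum>i\<le>k. 1 / real i) = (\<Sum>i=0..k. 1 / real i)" by (simp add: atMost_atLeast0)
    also have "\<dots> = 1 / real 0 + (\<Sum>i=Suc 0..k. 1 / real i)" by (rule sum.atLeast_Suc_atMost) simp
    finally show ?thesis by simp
  qed
  finally show ?thesis by simp
qed

lemma gen_fun:
  assumes q: "0 < q" "q < 1" and s: "0 < s" "s < 1"
  shows "(\<lambda>k. acoef q (Suc k) * (1 - s)^k * ((1 - s/2) powr (q - 1) - 1)) sums Fq q s"
proof -
  define x where "x = 1 - s"
  have x: "0 < x" "x < 1" "1 - x = s" using s by (auto simp: x_def)
  define W where "W = (1 - s/2) powr (q - 1) - 1"
  show ?thesis
  proof (cases "q = 1/2")
    case False
    define a' where "a' k = (pochhammer (2*q) k / fact k - 1) / (2*q - 1)" for k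
    have "(\<lambda>k. pochhammer (2*q) k / fact k * x^k - x^k) sums ((1 - x) powr (-2*q) - 1 / (1 - x))"
      using cc_sums[of x q] geometric_sums[of x] x by (intro sums_diff) auto
    from sums_divide[OF this, of "2*q - 1"]
    have "(\<lambda>k. a' k * x^k) sums (((1 - x) powr (-2*q) - 1 / (1 - x)) / (2*q - 1))"
      by (simp add: a'_def field_simps)
    from sums_shift_div[OF this] have
      "(\<lambda>k. a' (Suc k) * x^k) sums (((1 - x) powr (-2*q) - 1 / (1 - x)) / (2*q - 1) / x)"
      using x by (simp add: a'_def)
    moreover have "a' (Suc k) = acoef q (Suc k)" for k
      using acoef_ne[OF q False, of "Suc k"] by (simp add: a'_def)
    ultimately have "(\<lambda>k. acoef q (Suc k) * x^k) sums (((1 - x) powr (-2*q) - 1 / (1 - x)) / (2*q - 1) / x)"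
      by simp
    from sums_mult2[OF this, of W]
    have S: "(\<lambda>k. acoef q (Suc k) * x^k * W) sums (((1 - x) powr (-2*q) - 1 / (1 - x)) / (2*q - 1) / x * W)" .
    have p: "s powr (-2*q + 1) = s powr (-2*q) * s"
    proof -
      have "s powr (-2*q + 1) = s powr (-2*q) * s powr 1" by (rule powr_add)
      then show ?thesis using s by simp
    qed
    have "((1 - x) powr (-2*q) - 1 / (1 - x)) / (2*q - 1) / x * W = Fq q s"
      unfolding Fq_def W_def x(3) using False s unfolding p x_def
      by (simp add: field_simps)
    with S show ?thesis unfolding x_def W_def by simp
  next
    case True
    then have qq: "q = 1/2" .
    have la: "(\<lambda>i. x^i / real i) sums (- ln (1 - x))"
    proof -
      have "\<bar>-x\<bar> < 1" using x by auto
      from ln_series'[OF this] have "(\<lambda>n. - (x^n) / real n) sums ln (1 - x)" by simp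
      from sums_minus[OF this] show ?thesis by simp
    qed
    have lb: "(\<lambda>j. x^j) sums (1 / (1 - x))" using geometric_sums[of x] x by simp
    have "(\<lambda>k. \<Sum>i\<le>k. x^i / real i * x^(k - i)) sums ((\<Sum>i. x^i / real i) * (\<Sum>j. x^j))"
    proof (rule Cauchy_product_sums)
      show "summable (\<lambda>i. norm (x^i / real i))" using la x by (simp add: sums_iff)
      show "summable (\<lambda>j. norm (x^j))" using lb x by (simp add: sums_iff)
    qed
    also have "(\<Sum>i. x^i / real i) = - ln (1 - x)" using la by (simp add: sums_iff)
    also have "(\<Sum>j. x^j) = 1 / (1 - x)" using lb by (simp add: sums_iff)
    finally have "(\<lambda>k. \<Sum>i\<le>k. x^i / real i * x^(k - i)) sums (- ln (1 - x) * (1 / (1 - x)))" .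
    then have "(\<lambda>k. (\<Sum>j=1..k. 1 / real j) * x^k) sums (- ln (1 - x) * (1 / (1 - x)))"
      by (simp only: harm_sum_rewrite)
    from sums_shift_div[OF this] have
      "(\<lambda>k. (\<Sum>j=1..Suc k. 1 / real j) * x^k) sums (- ln (1 - x) * (1 / (1 - x)) / x)"
      using x by simp
    moreover have "(\<Sum>j=1..Suc k. 1 / real j) = acoef q (Suc k)" for k
      unfolding qq using acoef_half[of "Suc k"] by simp
    ultimately have "(\<lambda>k. acoef q (Suc k) * x^k) sums (- ln (1 - x) * (1 / (1 - x)) / x)"
      by simp
    from sums_mult2[OF this, of W]
    have S: "(\<lambda>k. acoef q (Suc k) * x^k * W) sums (- ln (1 - x) * (1 / (1 - x)) / x * W)" .
    have "- ln (1 - x) * (1 / (1 - x)) / x * W = Fq q s"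
      unfolding Fq_def W_def x(3) using True s unfolding x_def
      by (simp add: field_simps)
    with S show ?thesis unfolding x_def W_def by simp
  qed
qed



lemma W_series:
  fixes q s :: real
  assumes "0 \<le> s" "s \<le> 1"
  shows "(\<lambda>n. bcoef q (Suc n) * s ^ (Suc n)) sums ((1 - s/2) powr (q - 1) - 1)"
proof -
  have "(\<lambda>n. bcoef q n * s ^ n) sums ((1 - s/2) powr (q - 1))" using assms by (intro bcoef_sums) auto
  then have "(\<lambda>n. bcoef q (Suc n) * s ^ (Suc n)) sums ((1 - s/2) powr (q - 1) - bcoef q 0 * s^0)"
    by (subst sums_Suc_iff) simp
  moreover have "bcoef q 0 = 1" by (simp add: bcoef_def)
  ultimately show ?thesis by simp
qed

lemma W_bounds:
  fixes q s :: real
  assumes q: "q < 1" and s: "0 < s" "s < 1"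
  shows "0 \<le> (1 - s/2) powr (q - 1) - 1"
    and "(1 - s/2) powr (q - 1) - 1 \<le> s * ((1/2) powr (q - 1) - 1)"
proof -
  have S: "(\<lambda>n. bcoef q (Suc n) * s ^ (Suc n)) sums ((1 - s/2) powr (q - 1) - 1)"
    using s by (intro W_series) auto
  show "0 \<le> (1 - s/2) powr (q - 1) - 1"
    using S bcoef_nonneg[OF q] s by (intro sums_le[OF _ sums_zero S]) auto
  have S1: "(\<lambda>n. bcoef q (Suc n) * 1 ^ (Suc n)) sums ((1 - 1/2) powr (q - 1) - 1)"
    by (intro W_series) auto
  have S1': "(\<lambda>n. s * bcoef q (Suc n)) sums (s * ((1/2) powr (q - 1) - 1))"
    using sums_mult[OF S1, of s] by simp
  show "(1 - s/2) powr (q - 1) - 1 \<le> s * ((1/2) powr (q - 1) - 1)"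
  proof (rule sums_le[OF _ S S1'])
    fix n
    have "s ^ Suc n \<le> s" using s by (simp add: power_le_one mult_left_le)
    then have "bcoef q (Suc n) * s ^ Suc n \<le> bcoef q (Suc n) * s"
      using bcoef_nonneg[OF q, of "Suc n"] by (rule mult_left_mono)
    then show "bcoef q (Suc n) * s ^ Suc n \<le> s * bcoef q (Suc n)"
      by (metis mult.commute)
  qed
qed

lemma aux_deriv:
  fixes q P Q :: real
  assumes "q < 1" "2*q - 1 \<noteq> 0"
  shows "(-q * P - (1 - 2*q) * Q) / (1 - q) - ((1 - 2*q) * Q - 0) / (2*q - 1) = q / (1 - q) * (Q - P)"
proof -
  have h1: "((1 - 2*q) * Q - 0) / (2*q - 1) = - Q" using assms by (simp add: field_simps)
  have "(-q * P - (1 - 2*q) * Q) / (1 - q) + Q = q / (1 - q) * (Q - P)"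
    using assms by (simp add: field_simps)
  then show ?thesis using h1 by simp
qed

lemma aux_div:
  fixes a b c d :: real
  assumes "0 < d" "a \<le> b * d / c"
  shows "a / d \<le> b / c"
proof -
  have "b * d / c = (b / c) * d" by simp
  then show ?thesis using assms by (simp add: pos_divide_le_eq)
qed

lemma A_bound_ne:
  fixes q s :: real
  assumes q: "0 < q" "q < 1" "q \<noteq> 1/2" and s: "0 < s" "s < 1"
  shows "(s powr (-2*q + 1) - 1) / (1 - s) / (2*q - 1) \<le> s powr (-q) / (1 - q)"
proof -
  define g where "g x = (x powr (-q) - x powr (1 - 2*q)) / (1 - q) - (x powr (1 - 2*q) - 1) / (2*q - 1)" for x
  have "g 1 \<le> g s"
  proof (rule DERIV_nonpos_imp_nonincreasing[of s 1 g])
    show "s \<le> 1" using s by simp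
    fix x assume x: "s \<le> x" "x \<le> 1"
    then have x0: "0 < x" using s by simp
    have D: "(g has_real_derivative
       ((-q * x powr (-q - 1) - (1 - 2*q) * x powr (1 - 2*q - 1)) / (1 - q) - ((1 - 2*q) * x powr (1 - 2*q - 1) - 0) / (2*q - 1))) (at x)"
      unfolding g_def
      by (intro DERIV_diff DERIV_cdivide has_real_derivative_powr DERIV_const x0)
    have e: "1 - 2*q - 1 = -2*q" by simp
    have le: "x powr (-2*q) \<le> x powr (-q - 1)" using x x0 q by (intro powr_mono') auto
    have "(-q * x powr (-q - 1) - (1 - 2*q) * x powr (1 - 2*q - 1)) / (1 - q) - ((1 - 2*q) * x powr (1 - 2*q - 1) - 0) / (2*q - 1)
        = q / (1 - q) * (x powr (-2*q) - x powr (-q - 1))"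
      unfolding e using q by (intro aux_deriv) auto
    also have "\<dots> \<le> 0" using q le by (intro mult_nonneg_nonpos) auto
    finally show "\<exists>y. (g has_real_derivative y) (at x) \<and> y \<le> 0" using D by blast
  qed
  moreover have "g 1 = 0" by (simp add: g_def)
  ultimately have g0: "(s powr (1 - 2*q) - 1) / (2*q - 1) \<le> (s powr (-q) - s powr (1 - 2*q)) / (1 - q)"
    by (simp add: g_def)
  have sp: "s powr (1 - 2*q) = s powr (-q) * s powr (1 - q)" by (simp add: powr_add[symmetric])
  have "s \<le> s powr (1 - q)"
  proof -
    have "s powr 1 \<le> s powr (1 - q)" using s q by (intro powr_mono') auto
    then show ?thesis using s by simp
  qed
  then have "s powr (-q) - s powr (1 - 2*q) \<le> s powr (-q) * (1 - s)"
    unfolding sp using s by (simp add: right_diff_distrib mult_left_mono)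
  then have "(s powr (1 - 2*q) - 1) / (2*q - 1) \<le> s powr (-q) * (1 - s) / (1 - q)"
    using g0 q by (smt (verit) divide_right_mono)
  moreover have "0 < 1 - s" using s by simp
  ultimately have "(s powr (1 - 2*q) - 1) / (2*q - 1) / (1 - s) \<le> s powr (-q) / (1 - q)"
    using aux_div by blast
  moreover have "-2*q + 1 = 1 - 2*q" by simp
  moreover have "(s powr (1 - 2*q) - 1) / (1 - s) / (2*q - 1) = (s powr (1 - 2*q) - 1) / (2*q - 1) / (1 - s)"
    by (simp add: divide_divide_eq_left mult.commute)
  ultimately show ?thesis by (simp add: ac_simps)
qed



lemma A_bound_half:
  fixes s :: real
  assumes s: "0 < s" "s < 1"
  shows "- ln s / (1 - s) \<le> s powr (-(1/2)) / (1 - 1/2)"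
proof -
  define y where "y = s powr (-(1/2))"
  have y0: "0 < y" using s by (simp add: y_def)
  have "ln y \<le> y - 1" using y0 by (rule ln_le_minus_one)
  moreover have "ln y = -(1/2) * ln s" using s by (simp add: y_def ln_powr)
  ultimately have l: "- ln s \<le> 2 * (y - 1)" by simp
  have "s powr 1 \<le> s powr (1/2)" using s by (intro powr_mono') auto
  then have sh: "s \<le> s powr (1/2)" using s by simp
  have yy: "y * s powr (1/2) = 1"
    unfolding y_def using s by (simp add: powr_add[symmetric])
  have "2 * (y - 1) = 2 * y * (1 - s powr (1/2))" using yy by (simp add: algebra_simps)
  also have "\<dots> \<le> 2 * y * (1 - s)" using sh y0 by (intro mult_left_mono) auto
  finally have l2: "- ln s \<le> 2 * y * (1 - s)" using l by simp
  have d: "0 < 1 - s" using s by simp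
  have "- ln s / (1 - s) \<le> 2 * y" using pos_divide_le_eq[OF d] l2 by metis
  then show ?thesis by (simp add: y_def)
qed

lemma half_aux: "0 \<le> (x::real) \<Longrightarrow> x \<le> 1/2 * k \<Longrightarrow> 0 \<le> k" by linarith

lemma KB_nonneg:
  fixes q :: real
  assumes "q < 1"
  shows "0 \<le> (1/2) powr (q - 1) - 1"
proof -
  have "0 \<le> (1 - (1/2)/2) powr (q - 1) - 1" "(1 - (1/2)/2) powr (q - 1) - 1 \<le> (1/2) * ((1/2) powr (q - 1) - 1)"
    using W_bounds[OF assms, of "1/2"] by auto
  then show ?thesis by (rule half_aux)
qed

lemma Fq_bounds:
  fixes q s :: real
  assumes q: "0 < q" "q < 1" and s: "0 < s" "s < 1"
  shows "0 \<le> Fq q s" and "Fq q s \<le> ((1/2) powr (q - 1) - 1) / (1 - q) * s powr (-q)"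
proof -
  show "0 \<le> Fq q s"
    using gen_fun[OF q s] acoef_nonneg[OF q] W_bounds(1)[OF q(2) s] s
    by (intro sums_le[OF _ sums_zero gen_fun[OF q s]]) auto
  define W where "W = (1 - s/2) powr (q - 1) - 1"
  define KB where "KB = (1/2) powr (q - 1) - 1"
  have W0: "0 \<le> W / s" using W_bounds(1)[OF q(2) s] s by (simp add: W_def)
  have W1: "W / s \<le> KB" using W_bounds(2)[OF q(2) s] s by (simp add: W_def KB_def pos_divide_le_eq mult.commute)
  have KB0: "0 \<le> KB" using KB_nonneg[OF q(2)] by (simp add: KB_def)
  obtain A where A: "Fq q s = A * (W / s)" "A \<le> s powr (-q) / (1 - q)"
  proof (cases "q = 1/2")
    case True
    then have qq: "q = 1/2" .
    show ?thesis
    proof (rule that)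
      show "Fq q s = (- ln s / (1 - s)) * (W / s)" using True by (simp add: Fq_def W_def)
      show "- ln s / (1 - s) \<le> s powr (-q) / (1 - q)" unfolding qq by (rule A_bound_half[OF s])
    qed
  next
    case False
    show ?thesis
    proof (rule that)
      show "Fq q s = ((s powr (-2*q + 1) - 1) / (1 - s) / (2*q - 1)) * (W / s)" using False by (simp add: Fq_def W_def)
      show "(s powr (-2*q + 1) - 1) / (1 - s) / (2*q - 1) \<le> s powr (-q) / (1 - q)"
        using A_bound_ne[OF q False s] .
    qed
  qed
  have B0: "0 \<le> s powr (-q) / (1 - q)" using q by simp
  have "Fq q s \<le> s powr (-q) / (1 - q) * (W / s)" unfolding A(1) using A(2) W0 by (rule mult_right_mono)
  also have "\<dots> \<le> s powr (-q) / (1 - q) * KB" using W1 B0 by (rule mult_left_mono)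
  finally show "Fq q s \<le> ((1/2) powr (q - 1) - 1) / (1 - q) * s powr (-q)" by (simp add: KB_def ac_simps)
qed

lemma nn_powr_integral:
  fixes q c :: real
  assumes "q < 1" "0 \<le> c"
  shows "(\<integral>\<^sup>+s. ennreal (c * s powr (-q)) * indicator {0<..<1} s \<partial>lborel) = ennreal (c * (1 / (1 - q)))"
proof -
  have "((\<lambda>x. x powr (-q)) has_integral (1 powr (-q + 1) / (-q + 1))) {0..1}"
    using assms by (intro has_integral_powr_from_0) auto
  then have "((\<lambda>x. x powr (-q)) has_integral (1 / (1 - q))) {0<..<1}"
    by (simp add: has_integral_Icc_iff_Ioo)
  then have "((\<lambda>x. c * x powr (-q)) has_integral (c * (1 / (1 - q)))) {0<..<1}"
    by (rule has_integral_mult_right)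
  then show ?thesis using assms by (intro nn_integral_has_integral_lebesgue') auto
qed

lemma Fq_finite:
  fixes q :: real
  assumes q: "0 < q" "q < 1"
  shows "(\<integral>\<^sup>+s. ennreal (Fq q s) * indicator {0<..<1} s \<partial>lborel) < top"
proof -
  define c where "c = ((1/2) powr (q - 1) - 1) / (1 - q)"
  have c0: "0 \<le> c" using KB_nonneg[OF q(2)] q by (simp add: c_def)
  have "(\<integral>\<^sup>+s. ennreal (Fq q s) * indicator {0<..<1} s \<partial>lborel)
      \<le> (\<integral>\<^sup>+s. ennreal (c * s powr (-q)) * indicator {0<..<1} s \<partial>lborel)"
  proof (intro nn_integral_mono)
    fix s :: real
    show "ennreal (Fq q s) * indicator {0<..<1} s \<le> ennreal (c * s powr (-q)) * indicator {0<..<1} s"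
    proof (cases "s \<in> {0<..<1}")
      case True
      then have "Fq q s \<le> c * s powr (-q)" using Fq_bounds(2)[OF q] by (simp add: c_def)
      then show ?thesis using True by (simp add: ennreal_leI)
    qed simp
  qed
  also have "\<dots> = ennreal (c * (1 / (1 - q)))" using q c0 by (intro nn_powr_integral) auto
  also have "\<dots> < top" by simp
  finally show ?thesis .
qed



lemma setint_nn:
  fixes f :: "real \<Rightarrow> real"
  assumes "f \<in> borel_measurable lborel" "\<And>x. x \<in> {0<..<1} \<Longrightarrow> 0 \<le> f x"
  shows "(LBINT x:{0<..<1}. f x) = enn2real (\<integral>\<^sup>+x. ennreal (f x) * indicator {0<..<1} x \<partial>lborel)"
proof -
  have "(LBINT x:{0<..<1}. f x) = integral\<^sup>L lborel (\<lambda>x. indicator {0<..<1} x *\<^sub>R f x)"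
    by (simp add: set_lebesgue_integral_def)
  also have "\<dots> = enn2real (\<integral>\<^sup>+x. ennreal (indicator {0<..<1} x *\<^sub>R f x) \<partial>lborel)"
    using assms by (intro integral_eq_nn_integral) (auto simp: indicator_def)
  also have "(\<integral>\<^sup>+x. ennreal (indicator {0<..<1} x *\<^sub>R f x) \<partial>lborel) = (\<integral>\<^sup>+x. ennreal (f x) * indicator {0<..<1} x \<partial>lborel)"
    by (intro nn_integral_cong) (auto simp: indicator_def)
  finally show ?thesis .
qed

lemma Fq_measurable: "(\<lambda>u. Fq q u) \<in> borel_measurable lborel"
  unfolding Fq_def by measurable

lemma aux_t:
  fixes n a b h g0 j :: real
  assumes "n \<noteq> 0" "a \<noteq> 0" "b \<noteq> 0"
  shows "h * (n * g0 / (a * b)) / n^2 * j = h / n * (g0 / (a * b)) * j"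
  using assms by (simp add: power2_eq_square field_simps)

lemma ennreal_mult3:
  fixes a c j :: real
  assumes "0 \<le> a" "0 \<le> c"
  shows "ennreal (a * c * j) = ennreal a * (ennreal c * ennreal j)"
  using assms by (metis ennreal_mult' mult.assoc)

theorem lemma3p8:
  fixes q :: real
  assumes "0 < q" and "q < 1"
  shows "(\<lambda>n. T1 n q) \<longlonglongrightarrow> T1_limit q"
proof -
  note q = assms
  define jf where "jf k u = u powr (real k + q - 1) * (1 - u) powr (1 - q) / (1 + u)" for k u
  define J where "J k = (LBINT u:{0<..<1}. jf k u)" for k
  define W where "W s = (1 - s/2) powr (q - 1) - 1" for s
  define t where "t k = H k q * I k q / (real k)^2 * J k" for k
  have T1eq: "T1 n q = (\<Sum>k<n. t (Suc k))" for n
    unfolding T1_def t_def J_def jf_def by (simp add: sum.atLeast1_atMost_eq)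
  have Jnn: "ennreal (J k) = (\<integral>\<^sup>+u. ennreal (jf k u) * indicator {0<..<1} u \<partial>lborel)" if k: "k \<ge> 1" for k
  proof -
    have "(\<integral>\<^sup>+u. ennreal (jf k u) * indicator {0<..<1} u \<partial>lborel) \<le> (\<integral>\<^sup>+u. 1 * indicator {0<..<1::real} u \<partial>lborel)"
    proof (intro nn_integral_mono)
      fix u :: real
      show "ennreal (jf k u) * indicator {0<..<1} u \<le> 1 * indicator {0<..<1} u"
      proof (cases "u \<in> {0<..<1}")
        case True
        have a: "u powr (real k + q - 1) \<le> 1" using True k q by (intro powr_le1) auto
        have b: "(1 - u) powr (1 - q) \<le> 1" using True q by (intro powr_le1) auto
        have c: "1 / (1 + u) \<le> 1" using True by simp
        have "jf k u = u powr (real k + q - 1) * (1 - u) powr (1 - q) * (1 / (1 + u))"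
          by (simp add: jf_def)
        also have "\<dots> \<le> 1" using a b c True by (intro mult_le_one) auto
        finally show ?thesis using True by simp
      qed simp
    qed
    also have "\<dots> = 1" by simp
    finally have fin: "(\<integral>\<^sup>+u. ennreal (jf k u) * indicator {0<..<1} u \<partial>lborel) < top"
      using ennreal_less_top[of 1] by (simp add: le_less_trans)
    have "J k = enn2real (\<integral>\<^sup>+u. ennreal (jf k u) * indicator {0<..<1} u \<partial>lborel)"
      unfolding J_def by (rule setint_nn) (auto simp: jf_def)
    then show ?thesis using fin by simp
  qed
  have tt: "t (Suc k) = acoef q (Suc k) * (Gamma (real (Suc k)) / (Gamma (real (Suc k) + q) * Gamma (1 - q))) * J (Suc k)" for k
  proof -
    have "real (Suc k) \<notin> \<int>\<^sub>\<le>\<^sub>0" by (auto elim!: nonpos_Ints_cases)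
    then have g: "Gamma (real (Suc k) + 1) = real (Suc k) * Gamma (real (Suc k))" by (rule Gamma_plus1)
    have "Gamma (real (Suc k) + q) > 0" "Gamma (1 - q) > 0" using q by (auto intro!: Gamma_real_pos)
    then show ?thesis unfolding t_def acoef_def I_def g
      by (intro aux_t) auto
  qed
  have cnn: "0 \<le> Gamma (real (Suc k)) / (Gamma (real (Suc k) + q) * Gamma (1 - q))" for k
    using q by (auto intro!: divide_nonneg_pos mult_pos_pos Gamma_real_pos less_imp_le)
  have Jnn0: "0 \<le> J k" for k
  proof -
    have "J k = enn2real (\<integral>\<^sup>+u. ennreal (jf k u) * indicator {0<..<1} u \<partial>lborel)"
      unfolding J_def by (rule setint_nn) (auto simp: jf_def)
    then show ?thesis by simp
  qed
  have tnn: "0 \<le> t (Suc k)" for k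
    unfolding tt using acoef_nonneg[OF q] cnn Jnn0 by (intro mult_nonneg_nonneg) auto
  have tk: "ennreal (t (Suc k)) = ennreal (acoef q (Suc k)) * (\<integral>\<^sup>+s. ennreal ((1 - s)^k * W s) * indicator {0<..<1} s \<partial>lborel)" for k
  proof -
    have "ennreal (t (Suc k)) = ennreal (acoef q (Suc k)) *
        (ennreal (Gamma (real (Suc k)) / (Gamma (real (Suc k) + q) * Gamma (1 - q))) * ennreal (J (Suc k)))"
      unfolding tt using acoef_nonneg[OF q, of "Suc k"] cnn[of k] by (rule ennreal_mult3)
    also have "ennreal (Gamma (real (Suc k)) / (Gamma (real (Suc k) + q) * Gamma (1 - q))) * ennreal (J (Suc k))
        = (\<integral>\<^sup>+s. ennreal ((1 - s)^(Suc k - 1) * ((1 - s/2) powr (q - 1) - 1)) * indicator {0<..<1} s \<partial>lborel)"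
      unfolding Jnn[of "Suc k", simplified] jf_def by (rule key_k[OF q]) simp
    finally show ?thesis by (simp add: W_def)
  qed
  have sumeq: "(\<Sum>k. ennreal (t (Suc k))) = (\<integral>\<^sup>+s. ennreal (Fq q s) * indicator {0<..<1} s \<partial>lborel)"
  proof -
    have "(\<Sum>k. ennreal (t (Suc k))) = (\<Sum>k. \<integral>\<^sup>+s. ennreal (acoef q (Suc k) * (1 - s)^k * W s) * indicator {0<..<1} s \<partial>lborel)"
    proof (intro suminf_cong)
      fix k
      have "ennreal (acoef q (Suc k)) * (\<integral>\<^sup>+s. ennreal ((1 - s)^k * W s) * indicator {0<..<1} s \<partial>lborel)
          = (\<integral>\<^sup>+s. ennreal (acoef q (Suc k)) * (ennreal ((1 - s)^k * W s) * indicator {0<..<1} s) \<partial>lborel)"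
        by (rule nn_integral_cmult[symmetric]) (unfold W_def, measurable)
      also have "\<dots> = (\<integral>\<^sup>+s. ennreal (acoef q (Suc k) * (1 - s)^k * W s) * indicator {0<..<1} s \<partial>lborel)"
        using acoef_nonneg[OF q] by (intro nn_integral_cong) (simp add: ennreal_mult' mult.assoc)
      finally show "ennreal (t (Suc k)) = (\<integral>\<^sup>+s. ennreal (acoef q (Suc k) * (1 - s)^k * W s) * indicator {0<..<1} s \<partial>lborel)"
        using tk by simp
    qed
    also have "\<dots> = (\<integral>\<^sup>+s. ennreal (Fq q s) * indicator {0<..<1} s \<partial>lborel)"
    proof (rule nn_sums_integral[symmetric])
      fix s :: real assume "s \<in> {0<..<1}"
      then show "(\<lambda>k. acoef q (Suc k) * (1 - s)^k * W s) sums Fq q s"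
        unfolding W_def using gen_fun[OF q] by auto
    next
      fix k and s :: real assume "s \<in> {0<..<1}"
      then show "0 \<le> acoef q (Suc k) * (1 - s)^k * W s"
        unfolding W_def using acoef_nonneg[OF q] W_bounds(1)[OF q(2)] by auto
    qed (unfold W_def, measurable)
    finally show ?thesis .
  qed
  have fin: "(\<integral>\<^sup>+s. ennreal (Fq q s) * indicator {0<..<1} s \<partial>lborel) < top"
    by (rule Fq_finite[OF q])
  define L where "L = enn2real (\<integral>\<^sup>+s. ennreal (Fq q s) * indicator {0<..<1} s \<partial>lborel)"
  have L: "(\<integral>\<^sup>+s. ennreal (Fq q s) * indicator {0<..<1} s \<partial>lborel) = ennreal L"
    using fin by (simp add: L_def)
  have L0: "0 \<le> L" by (simp add: L_def)
  have summ: "summable (\<lambda>k. t (Suc k))"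
    using tnn sumeq fin by (intro summable_suminf_not_top) auto
  have "ennreal (\<Sum>k. t (Suc k)) = ennreal L"
    using suminf_ennreal2[of "\<lambda>k. t (Suc k)", OF tnn summ] sumeq L by simp
  then have "(\<Sum>k. t (Suc k)) = L" using L0 tnn summ by (simp add: suminf_nonneg)
  then have "(\<lambda>k. t (Suc k)) sums L" using summ by (simp add: sums_iff)
  then have "(\<lambda>n. \<Sum>k<n. t (Suc k)) \<longlonglongrightarrow> L" by (simp add: sums_def)
  then have lim: "(\<lambda>n. T1 n q) \<longlonglongrightarrow> L" by (simp add: T1eq)
  have "L = (LBINT s:{0<..<1}. Fq q s)"
    unfolding L_def using Fq_measurable Fq_bounds(1)[OF q] by (intro setint_nn[symmetric]) auto
  also have "\<dots> = T1_limit q"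
  proof (cases "q = 1/2")
    case True
    then have qq: "q = 1/2" .
    show ?thesis unfolding T1_limit_def Fq_def qq by simp
  next
    case False
    have "(LBINT s:{0<..<1}. Fq q s) = 1 / (2*q - 1) *
        (LBINT u:{0<..<1}. (u powr (-2*q + 1) - 1) / (1 - u) * (((1 - u/2) powr (q - 1) - 1) / u))"
      unfolding Fq_def if_not_P[OF False] by (rule set_integral_mult_right)
    then show ?thesis unfolding T1_limit_def if_not_P[OF False] .
  qed
  finally show ?thesis using lim by simp
qed


end
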